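(* Let $E=(E_-,\infty)$ with $E_-\in\{-\infty\}\cup\mathbb R$. Let $u,\tilde u:E\to(0,\infty)$ be two global $C^2$ solutions of $$0=\tfrac12b^2u''+\tilde au'+\eta u-u^2-d\frac{(u')^2}{u}$$ such that $\tilde u(y)/u(y)\to1$ as $y\to\partial E$ (i.e. as $y\downarrow E_-$ and as $y\to\infty$). Then $u=\tilde u$.
   Context: $r,\lambda,\sigma,a,b,\rho,\delta:E\to\mathbb R$ are locally Lipschitz with $\sigma>0$, $b(y)\neq0$, $\rho(y)\in[-1,1]$; $R\in(0,\infty)\setminus\{1\}$. Define $\eta=\frac1R\big(\delta-(1-R)(r+\frac{\lambda^2}{2R})\big)$, $\tilde a=a+\frac{1-R}{R}\rho\lambda b$, $d=\frac12b^2((1-\rho^2)R+\rho^2+1)$. *)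

theory Defs
  imports "HOL-Analysis.Analysis"
begin

definition state_space :: "ereal \<Rightarrow> real set" where
  "state_space Em = {y. Em < ereal y}"

definition lower_bdry_filter :: "ereal \<Rightarrow> real filter" where
  "lower_bdry_filter Em = (if Em = -\<infinity> then at_bot else at_right (real_of_ereal Em))"

definition locally_lipschitz_on :: "real set \<Rightarrow> (real \<Rightarrow> real) \<Rightarrow> bool" where
  "locally_lipschitz_on E f \<longleftrightarrow>
     (\<forall>x\<in>E. \<exists>e>0. \<exists>C. C-lipschitz_on (cball x e \<inter> E) f)"

definition C2_on :: "real set \<Rightarrow> (real \<Rightarrow> real) \<Rightarrow> bool" where
  "C2_on E u \<longleftrightarrow>
     (\<forall>y\<in>E. u differentiable (at y) \<and> deriv u differentiable (at y))
     \<and> continuous_on E (deriv (deriv u))"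

definition eta_coef ::
  "real \<Rightarrow> (real \<Rightarrow> real) \<Rightarrow> (real \<Rightarrow> real) \<Rightarrow> (real \<Rightarrow> real) \<Rightarrow> real \<Rightarrow> real" where
  "eta_coef R r lam del y =
     (1 / R) * (del y - (1 - R) * (r y + (lam y)^2 / (2 * R)))"

definition atilde_coef ::
  "real \<Rightarrow> (real \<Rightarrow> real) \<Rightarrow> (real \<Rightarrow> real) \<Rightarrow> (real \<Rightarrow> real) \<Rightarrow> (real \<Rightarrow> real) \<Rightarrow> real \<Rightarrow> real" where
  "atilde_coef R a rho lam b y = a y + (1 - R) / R * rho y * lam y * b y"

definition d_coef :: "real \<Rightarrow> (real \<Rightarrow> real) \<Rightarrow> (real \<Rightarrow> real) \<Rightarrow> real \<Rightarrow> real" where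
  "d_coef R b rho y = (1/2) * (b y)^2 * ((1 - (rho y)^2) * R + (rho y)^2 + 1)"

definition is_global_solution ::
  "real set \<Rightarrow> (real \<Rightarrow> real) \<Rightarrow> (real \<Rightarrow> real) \<Rightarrow> (real \<Rightarrow> real) \<Rightarrow> (real \<Rightarrow> real)
     \<Rightarrow> (real \<Rightarrow> real) \<Rightarrow> bool" where
  "is_global_solution E b atl eta d u \<longleftrightarrow>
     C2_on E u \<and>
     (\<forall>y\<in>E. 0 = (1/2) * (b y)^2 * deriv (deriv u) y + atl y * deriv u y + eta y * u y
                 - (u y)^2 - d y * (deriv u y)^2 / u y)"

end

theory Submission
  imports Defs
begin

lemma second_order_max:
  fixes g g' :: "real \<Rightarrow> real"
  assumes S: "open S" "y0 \<in> S" and mx: "\<forall>y\<in>S. g y \<le> g y0"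
    and dg: "\<forall>y\<in>S. (g has_real_derivative g' y) (at y)"
    and dg': "(g' has_real_derivative L) (at y0)"
  shows "g' y0 = 0 \<and> L \<le> 0"
proof -
  obtain e where e: "e > 0" "ball y0 e \<subseteq> S" using S openE by blast
  have g0: "g' y0 = 0"
    apply (rule DERIV_local_max[OF dg[rule_format, OF S(2)] e(1)])
    using e mx by (auto simp: dist_real_def subset_iff)
  have "L \<le> 0"
  proof (rule ccontr)
    assume "\<not> L \<le> 0"
    hence L: "L > 0" by simp
    have "((\<lambda>y. (g' y - g' y0) / (y - y0)) \<longlongrightarrow> L) (at y0)"
      using dg' has_field_derivative_iff by blast
    hence "eventually (\<lambda>y. (g' y - g' y0) / (y - y0) > 0) (at y0)"
      using L order_tendstoD(1) by blast
    then obtain d where d: "d > 0" "\<forall>y. y \<noteq> y0 \<and> dist y y0 < d \<longrightarrow> (g' y - g' y0) / (y - y0) > 0"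
      unfolding eventually_at by blast
    define m where "m = min d e"
    have m: "m > 0" "m \<le> d" "m \<le> e" using d e by (auto simp: m_def)
    define y1 where "y1 = y0 + m/2"
    have inS: "y \<in> S" if "y0 \<le> y" "y \<le> y1" for y
      using that e m by (auto simp: y1_def dist_real_def subset_iff)
    obtain z where z: "y0 < z" "z < y1" "g y1 - g y0 = (y1 - y0) * g' z"
      using MVT2[of y0 y1 g g'] m inS dg by (auto simp: y1_def)
    have "(g' z - g' y0) / (z - y0) > 0"
      using d(2) z m by (auto simp: y1_def dist_real_def)
    hence "g' z > 0" using z g0 by (simp add: zero_less_divide_iff)
    hence "g y1 - g y0 > 0" using z by simp
    moreover have "g y1 \<le> g y0" using mx inS[of y1] m by (auto simp: y1_def)
    ultimately show False by simp
  qed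
  with g0 show ?thesis by simp
qed


lemma alg_step:
  fixes B A H c U Ua Ub Tb X :: real
  assumes a1: "0 = B*Tb + A*(c*Ua) + H*(c*U) - (c*U)^2 - c*X"
    and a2: "0 = B*Ub + A*Ua + H*U - U^2 - X"
  shows "0 = B*(Tb - c*Ub) + c*U^2*(1-c)"
proof -
  have "B*(Tb - c*Ub) + c*U^2*(1-c) = (B*Tb + A*(c*Ua) + H*(c*U) - (c*U)^2 - c*X) - c*(B*Ub + A*Ua + H*U - U^2 - X)"
    by (simp add: algebra_simps power2_eq_square)
  also have "\<dots> = 0" using a1 a2 by simp
  finally show ?thesis by simp
qed

lemma half:
  fixes Em :: ereal and b atl eta d u ut :: "real \<Rightarrow> real"
  assumes Em: "Em \<noteq> \<infinity>"
    and u_pos: "\<forall>y\<in>state_space Em. u y > 0"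
    and ut_pos: "\<forall>y\<in>state_space Em. ut y > 0"
    and u_sol: "is_global_solution (state_space Em) b atl eta d u"
    and ut_sol: "is_global_solution (state_space Em) b atl eta d ut"
    and lim_lower: "((\<lambda>y. ut y / u y) \<longlongrightarrow> 1) (lower_bdry_filter Em)"
    and lim_upper: "((\<lambda>y. ut y / u y) \<longlongrightarrow> 1) at_top"
  shows "\<forall>y\<in>state_space Em. ut y \<le> u y"
proof (rule ccontr)
  define E where "E = state_space Em"
  define w where "w = (\<lambda>y. ut y / u y)"
  assume "\<not> (\<forall>y\<in>state_space Em. ut y \<le> u y)"
  then obtain y0 where y0: "y0 \<in> E" "ut y0 > u y0" unfolding E_def by auto
  have w0: "w y0 > 1" using y0 u_pos by (simp add: w_def E_def)
  have openE: "open E"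
  proof (cases Em)
    case (real e)
    then have "E = {e<..}" by (auto simp: E_def state_space_def)
    then show ?thesis by simp
  next
    case PInf then show ?thesis using Em by simp
  next
    case MInf
    then have "E = UNIV" by (auto simp: E_def state_space_def)
    then show ?thesis by simp
  qed
  have du: "\<forall>y\<in>E. (u has_real_derivative deriv u y) (at y) \<and> (deriv u has_real_derivative deriv (deriv u) y) (at y)"
    using u_sol unfolding is_global_solution_def C2_on_def E_def
    by (simp add: DERIV_deriv_iff_real_differentiable)
  have dut: "\<forall>y\<in>E. (ut has_real_derivative deriv ut y) (at y) \<and> (deriv ut has_real_derivative deriv (deriv ut) y) (at y)"
    using ut_sol unfolding is_global_solution_def C2_on_def E_def
    by (simp add: DERIV_deriv_iff_real_differentiable)
  have contw: "continuous_on E w"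
  proof (rule continuous_at_imp_continuous_on, rule ballI)
    fix y assume y: "y \<in> E"
    have "isCont u y" using du y DERIV_isCont by blast
    moreover have "isCont ut y" using dut y DERIV_isCont by blast
    ultimately show "isCont w y" unfolding w_def using u_pos y E_def
      by (intro isCont_divide) auto
  qed
  obtain q where q: "q \<ge> y0" "\<forall>y\<ge>q. w y < w y0"
  proof -
    have "eventually (\<lambda>y. w y < w y0) at_top"
      using order_tendstoD(2)[OF lim_upper w0] unfolding w_def .
    then obtain N where "\<forall>y\<ge>N. w y < w y0" unfolding eventually_at_top_linorder by blast
    then show ?thesis using that[of "max N y0"] by auto
  qed
  obtain p where p: "p \<le> y0" "p \<in> E" "\<forall>y\<in>E. y \<le> p \<longrightarrow> w y < w y0"
  proof (cases Em)
    case (real e)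
    have "eventually (\<lambda>y. w y < w y0) (at_right e)"
      using order_tendstoD(2)[OF lim_lower w0] real unfolding w_def lower_bdry_filter_def by simp
    then obtain bb where bb: "bb > e" "\<forall>y>e. y < bb \<longrightarrow> w y < w y0"
      unfolding eventually_at_right_field by blast
    have ye: "y0 > e" using y0 real by (simp add: E_def state_space_def)
    show ?thesis
      apply (rule that[of "min ((e+bb)/2) y0"])
      using bb ye real by (auto simp: E_def state_space_def)
  next
    case PInf then show ?thesis using Em by simp
  next
    case MInf
    have "eventually (\<lambda>y. w y < w y0) at_bot"
      using order_tendstoD(2)[OF lim_lower w0] MInf unfolding w_def lower_bdry_filter_def by simp
    then obtain N where "\<forall>y\<le>N. w y < w y0" unfolding eventually_at_bot_linorder by blast
    then show ?thesis using that[of "min N y0"] MInf by (auto simp: E_def state_space_def)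
  qed
  have pqE: "{p..q} \<subseteq> E"
  proof
    fix y assume "y \<in> {p..q}"
    then have "p \<le> y" by simp
    moreover have "Em < ereal p" using p(2) by (simp add: E_def state_space_def)
    ultimately show "y \<in> E" unfolding E_def state_space_def
      by (metis (mono_tags) ereal_less_eq(3) mem_Collect_eq order_less_le_trans)
  qed
  obtain z where z: "z \<in> {p..q}" "\<forall>y\<in>{p..q}. w y \<le> w z"
  proof -
    have "{p..q} \<noteq> {}" using p q by auto
    moreover have "continuous_on {p..q} w" using contw pqE continuous_on_subset by blast
    ultimately show ?thesis using continuous_attains_sup[of "{p..q}" w] that by auto
  qed
  have zE: "z \<in> E" using z pqE by auto
  have wz0: "w y0 \<le> w z" using z p q by auto
  have wmax: "\<forall>y\<in>E. w y \<le> w z"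
  proof
    fix y assume yE: "y \<in> E"
    show "w y \<le> w z"
    proof (cases "y \<in> {p..q}")
      case True then show ?thesis using z by auto
    next
      case False
      then have "y < p \<or> y > q" by auto
      then have "w y < w y0" using p q yE by auto
      then show ?thesis using wz0 by simp
    qed
  qed
  have U: "u z > 0" using u_pos zE E_def by simp
  define c where "c = w z"
  have c1: "c > 1" using w0 wz0 c_def by simp
  define g where "g = (\<lambda>y. ut y - c * u y)"
  define g' where "g' = (\<lambda>y. deriv ut y - c * deriv u y)"
  have gle: "\<forall>y\<in>E. g y \<le> g z"
  proof
    fix y assume yE: "y \<in> E"
    have "ut y / u y \<le> c" using wmax yE c_def w_def by simp
    hence "ut y \<le> c * u y" using u_pos yE E_def by (simp add: divide_le_eq)
    moreover have "ut z = c * u z" using U c_def w_def by simp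
    ultimately show "g y \<le> g z" by (simp add: g_def)
  qed
  have "g' z = 0 \<and> deriv (deriv ut) z - c * deriv (deriv u) z \<le> 0"
    unfolding g'_def[symmetric]
  proof (rule second_order_max[OF openE zE gle])
    show "\<forall>y\<in>E. (g has_real_derivative g' y) (at y)"
      using du dut unfolding g_def g'_def by (auto intro!: derivative_eq_intros)
    show "(g' has_real_derivative deriv (deriv ut) z - c * deriv (deriv u) z) (at z)"
      using du dut zE unfolding g'_def by (auto intro!: derivative_eq_intros)
  qed
  then have T1: "deriv ut z = c * deriv u z" and T2: "deriv (deriv ut) z \<le> c * deriv (deriv u) z"
    unfolding g'_def by auto
  have T0: "ut z = c * u z" using U c_def w_def by simp
  have eu: "0 = (1/2) * (b z)^2 * deriv (deriv u) z + atl z * deriv u z + eta z * u z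
                 - (u z)^2 - d z * (deriv u z)^2 / u z"
    using u_sol zE unfolding is_global_solution_def E_def by blast
  have et: "0 = (1/2) * (b z)^2 * deriv (deriv ut) z + atl z * deriv ut z + eta z * ut z
                 - (ut z)^2 - d z * (deriv ut z)^2 / ut z"
    using ut_sol zE unfolding is_global_solution_def E_def by blast
  have q1: "d z * (deriv ut z)^2 / ut z = c * (d z * (deriv u z)^2 / u z)"
    using T0 T1 U c1 by (simp add: power2_eq_square field_simps)
  have "0 = (1/2) * (b z)^2 * (deriv (deriv ut) z - c * deriv (deriv u) z) + c * (u z)^2 * (1 - c)"
    apply (rule alg_step[where A="atl z" and H="eta z" and Ua="deriv u z" and X="d z * (deriv u z)^2 / u z"])
    using et q1 T0 T1 apply simp
    using eu by simp
  moreover have "(1/2) * (b z)^2 * (deriv (deriv ut) z - c * deriv (deriv u) z) \<le> 0"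
    using T2 by (simp add: mult_nonneg_nonpos)
  moreover have "c * (u z)^2 * (1 - c) < 0"
    using c1 U by (simp add: mult_pos_neg)
  ultimately show False by linarith
qed

theorem theorem4p7:
  fixes Em :: ereal and R :: real
    and r lam sigma a b rho del u ut :: "real \<Rightarrow> real"
  assumes Em: "Em \<noteq> \<infinity>"
    and lip: "locally_lipschitz_on (state_space Em) r" "locally_lipschitz_on (state_space Em) lam"
      "locally_lipschitz_on (state_space Em) sigma" "locally_lipschitz_on (state_space Em) a"
      "locally_lipschitz_on (state_space Em) b" "locally_lipschitz_on (state_space Em) rho"
      "locally_lipschitz_on (state_space Em) del"
    and sigma_pos: "\<forall>y\<in>state_space Em. sigma y > 0"
    and b_nz: "\<forall>y\<in>state_space Em. b y \<noteq> 0"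
    and rho_bd: "\<forall>y\<in>state_space Em. -1 \<le> rho y \<and> rho y \<le> 1"
    and R: "R > 0" "R \<noteq> 1"
    and u_pos: "\<forall>y\<in>state_space Em. u y > 0"
    and ut_pos: "\<forall>y\<in>state_space Em. ut y > 0"
    and u_sol: "is_global_solution (state_space Em) b (atilde_coef R a rho lam b)
                  (eta_coef R r lam del) (d_coef R b rho) u"
    and ut_sol: "is_global_solution (state_space Em) b (atilde_coef R a rho lam b)
                  (eta_coef R r lam del) (d_coef R b rho) ut"
    and lim_lower: "((\<lambda>y. ut y / u y) \<longlongrightarrow> 1) (lower_bdry_filter Em)"
    and lim_upper: "((\<lambda>y. ut y / u y) \<longlongrightarrow> 1) at_top"
  shows "\<forall>y\<in>state_space Em. u y = ut y"
proof -
  have l1: "((\<lambda>y. u y / ut y) \<longlongrightarrow> 1) (lower_bdry_filter Em)"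
    using tendsto_inverse[OF lim_lower] by simp
  have l2: "((\<lambda>y. u y / ut y) \<longlongrightarrow> 1) at_top"
    using tendsto_inverse[OF lim_upper] by simp
  have "\<forall>y\<in>state_space Em. ut y \<le> u y"
    by (rule half[OF Em u_pos ut_pos u_sol ut_sol lim_lower lim_upper])
  moreover have "\<forall>y\<in>state_space Em. u y \<le> ut y"
    by (rule half[OF Em ut_pos u_pos ut_sol u_sol l1 l2])
  ultimately show ?thesis by (meson order_antisym)
qed

end
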